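(* There exist $A_0>1$ and $C_0>0$ such that for every $A\ge A_0$ and every $\xi\in H^1(\mathbb R,\mathbb C)\cap L^2_c$, with $w=\zeta_A\xi$, $$\|w'\|_{L^2}^2-|w(0)|^2\ \ge\ -\frac{C_0}{A^2}\big(\|w'\|_{L^2}^2+|w(0)|^2\big).$$
   Context: $\varphi(x)=2^{-1/2}e^{-|x|/2}$ and $L^2_c=\{u\in L^2(\mathbb R,\mathbb C):\int u\varphi\,dx=0\}$ (the continuous spectral subspace of $H_1=-\partial_x^2-\delta$; note $\|w'\|^2-|w(0)|^2$ is the quadratic form of $H_1$). $\chi:\mathbb R\to[0,1]$ is a fixed even smooth function with $\chi=1$ on $[-1,1]$, $\chi=0$ outside $[-2,2]$, $\chi'\le0$ on $(0,\infty)$. For $A>0$: $\zeta_A(x)=\exp\big(-\frac{|x|}{A}(1-\chi(x))\big)$. *)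

theory Defs
  imports "HOL-Analysis.Analysis"
begin

text \<open>Ground state of \<open>H_1 = -d^2/dx^2 - delta\<close>.\<close>
definition phi :: "real \<Rightarrow> real" where
  "phi x = exp (- \<bar>x\<bar> / 2) / sqrt 2"

definition smooth_fun :: "(real \<Rightarrow> real) \<Rightarrow> bool" where
  "smooth_fun f \<longleftrightarrow> (\<forall>n x. ((deriv ^^ n) f) differentiable (at x))"

definition cutoff :: "(real \<Rightarrow> real) \<Rightarrow> bool" where
  "cutoff ch \<longleftrightarrow> smooth_fun ch \<and> (\<forall>x. ch (-x) = ch x) \<and> (\<forall>x. 0 \<le> ch x \<and> ch x \<le> 1)
     \<and> (\<forall>x. \<bar>x\<bar> \<le> 1 \<longrightarrow> ch x = 1) \<and> (\<forall>x. \<bar>x\<bar> > 2 \<longrightarrow> ch x = 0)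
     \<and> (\<forall>x>0. deriv ch x \<le> 0)"

definition zeta :: "(real \<Rightarrow> real) \<Rightarrow> real \<Rightarrow> real \<Rightarrow> real" where
  "zeta ch A x = exp (- (\<bar>x\<bar> / A) * (1 - ch x))"

definition L2 :: "(real \<Rightarrow> complex) \<Rightarrow> bool" where
  "L2 f \<longleftrightarrow> f \<in> borel_measurable lborel \<and> integrable lborel (\<lambda>x. (cmod (f x))\<^sup>2)"

definition L2_norm_sq :: "(real \<Rightarrow> complex) \<Rightarrow> real" where
  "L2_norm_sq f = (LINT x|lborel. (cmod (f x))\<^sup>2)"

text \<open>\<open>H1_deriv u g\<close>: \<open>u \<in> H^1(R,C)\<close> (continuous representative, i.e. absolutely continuous)
  with weak derivative \<open>g \<in> L^2\<close>: \<open>u y - u x = \<integral>_x^y g\<close>.\<close>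
definition H1_deriv :: "(real \<Rightarrow> complex) \<Rightarrow> (real \<Rightarrow> complex) \<Rightarrow> bool" where
  "H1_deriv u g \<longleftrightarrow> L2 u \<and> L2 g \<and>
     (\<forall>x y. x \<le> y \<longrightarrow> u y - u x = (LINT t:{x..y}|lborel. g t))"

definition H1 :: "(real \<Rightarrow> complex) \<Rightarrow> bool" where
  "H1 u \<longleftrightarrow> (\<exists>g. H1_deriv u g)"

definition L2c :: "(real \<Rightarrow> complex) \<Rightarrow> bool" where
  "L2c u \<longleftrightarrow> L2 u \<and> (LINT x|lborel. u x * complex_of_real (phi x)) = 0"

end

theory Submission
  imports Defs
begin


lemma gamma_lborel:
  fixes s b :: real
  assumes s: "s > 0" and b: "b > 0"
  shows "integrable lborel (\<lambda>x. indicator {0<..} x * (x powr (s-1) * exp (-b*x)))"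
    and "(LINT x|lborel. indicator {0<..} x * (x powr (s-1) * exp (-b*x))) = Gamma s / b powr s"
proof -
  define g where "g t = indicator {0<..} t * (t powr (s-1) / exp t)" for t :: real
  have "((\<lambda>t. t powr (s - 1) / exp t) has_integral Gamma s) {0..}"
    by (rule Gamma_integral_real) (rule s)
  hence "((\<lambda>t. if t \<in> {0<..} then t powr (s - 1) / exp t else 0) has_integral Gamma s) {0..}"
    by (rule has_integral_spike [of "{0}", rotated 2]) auto
  hence "((\<lambda>t. t powr (s - 1) / exp t) has_integral Gamma s) {0<..}"
    by (subst (asm) has_integral_restrict) auto
  hence gi0: "((\<lambda>x. if x \<in> {0<..} then x powr (s - 1) / exp x else 0) has_integral Gamma s) UNIV"
    by (subst has_integral_restrict_UNIV)
  have "g = (\<lambda>x. if x \<in> {0<..} then x powr (s - 1) / exp x else 0)"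
    by (auto simp: g_def indicator_def fun_eq_iff)
  with gi0 have gi: "(g has_integral Gamma s) UNIV" by simp
  have gm: "g \<in> borel_measurable borel" unfolding g_def by measurable
  have gn: "\<And>x. 0 \<le> g x" unfolding g_def by (auto simp: indicator_def)
  have nn: "integral\<^sup>N lborel g = Gamma s"
    by (rule nn_integral_has_integral_lborel[OF gm gn gi])
  have gint: "integrable lborel g"
    by (rule integrableI_nn_integral_finite[OF _ _ nn]) (use gm gn in auto)
  have gval: "integral\<^sup>L lborel g = Gamma s"
    using has_integral_unique[OF has_integral_integral_lborel[OF gint] gi] .
  have eq: "g (0 + b * x) = b powr (s-1) * (indicator {0<..} x * (x powr (s-1) * exp (-b*x)))" for x
    using b by (auto simp: g_def indicator_def powr_mult exp_minus field_simps zero_less_mult_iff)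
  have "integrable lborel (\<lambda>x. g (0 + b * x))"
    using gint lborel_integrable_real_affine_iff[of b g 0] b by simp
  hence "integrable lborel (\<lambda>x. b powr (s-1) * (indicator {0<..} x * (x powr (s-1) * exp (-b*x))))"
    by (simp only: eq)
  thus int: "integrable lborel (\<lambda>x. indicator {0<..} x * (x powr (s-1) * exp (-b*x)))"
    using b by simp
  have "Gamma s = b * (LINT x|lborel. g (0 + b * x))"
    using lborel_integral_real_affine[of b g 0] b gval by simp
  also have "\<dots> = b * b powr (s-1) * (LINT x|lborel. indicator {0<..} x * (x powr (s-1) * exp (-b*x)))"
    by (simp only: eq integral_mult_right_zero)
  also have "b * b powr (s-1) = b powr s"
    using b by (simp add: powr_diff field_simps powr_add[symmetric])
  finally show "(LINT x|lborel. indicator {0<..} x * (x powr (s-1) * exp (-b*x))) = Gamma s / b powr s"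
    using b by (simp add: field_simps)
qed



lemma amgm_lim:
  fixes I Q L :: real
  assumes "0 \<le> I" "0 \<le> Q" "0 \<le> L" and h: "\<And>e. e > 0 \<Longrightarrow> I \<le> Q / (2*e) + e * L / 2"
  shows "I \<le> sqrt (L * Q)"
proof (cases "L > 0 \<and> Q > 0")
  case True
  define e where "e = sqrt (Q / L)"
  have e: "e > 0" using True by (simp add: e_def)
  have "Q / (2*e) = sqrt (L*Q) / 2"
    using True by (simp add: e_def real_sqrt_divide real_sqrt_mult field_simps)
  moreover have "e * L / 2 = sqrt (L*Q) / 2"
    using True by (simp add: e_def real_sqrt_divide real_sqrt_mult field_simps)
  ultimately show ?thesis using h[OF e] by simp
next
  case False
  show ?thesis
  proof (rule ccontr)
    assume "\<not> ?thesis"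
    hence I: "I > 0" using assms by (meson order.strict_trans1 not_le real_sqrt_ge_zero mult_nonneg_nonneg)
    show False
    proof (cases "L = 0")
      case True
      have ep: "0 < Q/I + 1" using I assms by (simp add: add_nonneg_pos)
      have "I \<le> Q / (2 * (Q/I + 1))" using h[OF ep] True by simp
      also have "\<dots> < I" using I assms by (simp add: field_simps; smt (verit) mult_nonneg_nonneg mult_pos_pos)
      finally show False by simp
    next
      case Lne: False
      hence Q: "Q = 0" using False assms by auto
      have ep: "0 < I/(L+1)" using I assms by simp
      have "I \<le> (I/(L+1)) * L / 2" using h[OF ep] Q by simp
      also have "\<dots> < I" using I assms by (simp add: field_simps; smt (verit) mult_nonneg_nonneg mult_pos_pos)
      finally show False by simp
    qed
  qed
qed

lemma seg_bound:
  fixes g :: "real \<Rightarrow> complex"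
  assumes g: "L2 g" and ab: "a \<le> b" and sub: "{a..b} \<subseteq> S" and S: "S \<in> sets lborel"
  shows "set_integrable lborel {a..b} g"
    and "cmod (LINT t:{a..b}|lborel. g t) \<le> sqrt ((b-a) * (LINT t:S|lborel. (cmod (g t))\<^sup>2))"
proof -
  have gm[measurable]: "g \<in> borel_measurable lborel" and gi: "integrable lborel (\<lambda>x. (cmod (g x))\<^sup>2)"
    using g by (auto simp: L2_def)
  have i1: "integrable lborel (\<lambda>x. indicator {a..b} x * (cmod (g x))\<^sup>2)"
    using integrable_mult_indicator[OF _ gi, of "{a..b}"] by simp
  have iS: "integrable lborel (\<lambda>x. indicator S x * (cmod (g x))\<^sup>2)"
    using integrable_mult_indicator[OF _ gi, of S] S by simp
  have i2: "integrable lborel (\<lambda>x. indicator {a..b} x :: real)"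
    using ab by (simp add: integrable_indicator_iff emeasure_lborel_Icc)
  have nb: "cmod (g x) \<le> ((cmod (g x))\<^sup>2 / e + e) / 2" if "e > 0" for x e
  proof -
    have "0 \<le> (cmod (g x) - e)\<^sup>2" by simp
    hence "2 * e * cmod (g x) \<le> (cmod (g x))\<^sup>2 + e\<^sup>2" by (simp add: power2_eq_square algebra_simps)
    thus ?thesis using that by (simp add: field_simps power2_eq_square)
  qed
  have ib: "integrable lborel (\<lambda>x. indicator {a..b} x * (((cmod (g x))\<^sup>2 / e + e) / 2))" for e
    using Bochner_Integration.integrable_add[OF integrable_mult_right[OF i1, of "1/(2*e)"] integrable_mult_right[OF i2, of "e/2"]]
    by (simp add: field_simps)
  have ia: "integrable lborel (\<lambda>x. indicator {a..b} x * cmod (g x))"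
    by (rule Bochner_Integration.integrable_bound[OF ib[of 1]]) (auto simp: indicator_def intro!: nb[of 1, simplified] AE_I2)
  thus si: "set_integrable lborel {a..b} g"
    unfolding set_integrable_def
    by (rule Bochner_Integration.integrable_bound) (auto simp: indicator_def)
  define I where "I = (LINT t|lborel. indicator {a..b} t * cmod (g t))"
  define Q where "Q = (LINT t|lborel. indicator S t * (cmod (g t))\<^sup>2)"
  have "cmod (LINT t:{a..b}|lborel. g t) \<le> (LINT t:{a..b}|lborel. cmod (g t))"
    by (rule set_integral_norm_bound[OF si])
  also have "\<dots> = I" by (simp add: I_def set_lebesgue_integral_def)
  finally have c1: "cmod (LINT t:{a..b}|lborel. g t) \<le> I" .
  have I0: "0 \<le> I" unfolding I_def by (rule integral_nonneg_AE) auto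
  have Q0: "0 \<le> Q" unfolding Q_def by (rule integral_nonneg_AE) auto
  have "I \<le> Q / (2*e) + e * (b-a) / 2" if e: "e > 0" for e
  proof -
    have "I \<le> (LINT x|lborel. indicator {a..b} x * (((cmod (g x))\<^sup>2 / e + e) / 2))"
      unfolding I_def
      by (rule integral_mono[OF ia ib]) (intro mult_left_mono nb e, simp)
    also have "\<dots> = (LINT x|lborel. indicator {a..b} x * (cmod (g x))\<^sup>2) / (2*e) + (LINT x|lborel. indicator {a..b} x) * e / 2"
    proof -
      have "(\<lambda>x. indicator {a..b} x * (((cmod (g x))\<^sup>2 / e + e) / 2)) =
            (\<lambda>x. (1/(2*e)) * (indicator {a..b} x * (cmod (g x))\<^sup>2) + (e/2) * indicator {a..b} x)"
        using e by (auto simp: fun_eq_iff field_simps)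
      hence "(LINT x|lborel. indicator {a..b} x * (((cmod (g x))\<^sup>2 / e + e) / 2)) =
          (LINT x|lborel. (1/(2*e)) * (indicator {a..b} x * (cmod (g x))\<^sup>2)) + (LINT x|lborel. (e/2) * indicator {a..b} x)"
        using integrable_mult_right[OF i1, of "1/(2*e)"] integrable_mult_right[OF i2, of "e/2"]
        by (simp del: integral_mult_right integral_mult_right_zero)
      also have "\<dots> = (LINT x|lborel. indicator {a..b} x * (cmod (g x))\<^sup>2) / (2*e) + (LINT x|lborel. indicator {a..b} x) * e / 2"
        by (simp only: integral_mult_right_zero) simp
      finally show ?thesis .
    qed
    also have "(LINT x|lborel. indicator {a..b} x * (cmod (g x))\<^sup>2) \<le> Q"
      unfolding Q_def
      by (rule integral_mono[OF i1 iS]) (use sub in \<open>auto simp: indicator_def\<close>)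
    also have "(LINT x|lborel. indicator {a..b} x :: real) = b - a"
      using ab by simp
    finally show ?thesis using e by (simp add: divide_right_mono field_simps)
  qed
  hence "I \<le> sqrt ((b-a) * Q)"
    by (intro amgm_lim I0 Q0) (use ab in auto)
  with c1 show "cmod (LINT t:{a..b}|lborel. g t) \<le> sqrt ((b-a) * (LINT t:S|lborel. (cmod (g t))\<^sup>2))"
    by (simp add: Q_def set_lebesgue_integral_def)
qed



lemma reflect_lborel:
  fixes f :: "real \<Rightarrow> real"
  assumes "integrable lborel f"
  shows "integrable lborel (\<lambda>x. f (-x))" "(LINT x|lborel. f (-x)) = (LINT x|lborel. f x)"
proof -
  show "integrable lborel (\<lambda>x. f (-x))"
    using lborel_integrable_real_affine_iff[of "-1" f 0] assms by simp
  show "(LINT x|lborel. f (-x)) = (LINT x|lborel. f x)"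
    using lborel_integral_real_affine[of "-1" f 0] by simp
qed

lemma Gamma_three_halves: "Gamma (3/2 :: real) = sqrt pi / 2"
proof -
  have "(1/2::real) \<notin> \<int>\<^sub>\<le>\<^sub>0"
    by (auto elim!: nonpos_Ints_cases)
  hence "Gamma (1/2 + 1 :: real) = 1/2 * Gamma (1/2)" by (rule Gamma_plus1)
  thus ?thesis by (simp add: Gamma_one_half_real)
qed



lemma core:
  fixes w g :: "real \<Rightarrow> complex" and \<psi> :: "real \<Rightarrow> real" and b :: real
  assumes H: "H1_deriv w g"
    and psim[measurable]: "\<psi> \<in> borel_measurable borel"
    and lo: "\<And>x. phi x \<le> \<psi> x" and hi: "\<And>x. \<psi> x \<le> exp (-b*\<bar>x\<bar>) / sqrt 2"
    and b: "49/100 \<le> b"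
    and orth: "(LINT x|lborel. w x * complex_of_real (\<psi> x)) = 0"
  shows "(cmod (w 0))\<^sup>2 \<le> L2_norm_sq g"
proof -
  have b0: "b > 0" using b by simp
  have gL: "L2 g" and wL: "L2 w" and Hd: "\<And>x y. x \<le> y \<Longrightarrow> w y - w x = (LINT t:{x..y}|lborel. g t)"
    using H by (auto simp: H1_deriv_def)
  have [measurable]: "g \<in> borel_measurable lborel" and gi: "integrable lborel (\<lambda>x. (cmod (g x))\<^sup>2)"
    using gL by (auto simp: L2_def)
  have wm[measurable]: "w \<in> borel_measurable lborel" using wL by (simp add: L2_def)
  have psi0: "0 \<le> \<psi> x" for x using lo[of x] by (smt (verit) phi_def divide_nonneg_nonneg exp_ge_zero real_sqrt_ge_zero)
  define Pp where "Pp = (LINT t:{0..}|lborel. (cmod (g t))\<^sup>2)"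
  define Pm where "Pm = (LINT t:{..0}|lborel. (cmod (g t))\<^sup>2)"
  define P where "P = L2_norm_sq g"
  have Pp0: "0 \<le> Pp" unfolding Pp_def set_lebesgue_integral_def by (rule integral_nonneg_AE) auto
  have Pm0: "0 \<le> Pm" unfolding Pm_def set_lebesgue_integral_def by (rule integral_nonneg_AE) auto
  have PpPm: "Pp + Pm = P"
  proof -
    have i1: "integrable lborel (\<lambda>x. indicator {0..} x * (cmod (g x))\<^sup>2)"
      using integrable_mult_indicator[OF _ gi, of "{0..}"] by simp
    have i2: "integrable lborel (\<lambda>x. indicator {..0} x * (cmod (g x))\<^sup>2)"
      using integrable_mult_indicator[OF _ gi, of "{..0}"] by simp
    have "Pp + Pm = (LINT x|lborel. indicator {0..} x * (cmod (g x))\<^sup>2 + indicator {..0} x * (cmod (g x))\<^sup>2)"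
      using i1 i2 by (simp add: Pp_def Pm_def set_lebesgue_integral_def)
    also have "\<dots> = (LINT x|lborel. (cmod (g x))\<^sup>2)"
      by (rule integral_cong_AE) (auto intro!: AE_mp[OF AE_lborel_singleton[of 0] AE_I2] simp: indicator_def)
    finally show ?thesis by (simp add: P_def L2_norm_sq_def)
  qed
  have ptp: "cmod (w x - w 0) \<le> sqrt (x * Pp)" if "0 \<le> x" for x
    using Hd[OF that] seg_bound(2)[OF gL that, of "{0..}"] by (simp add: Pp_def)
  have ptm: "cmod (w x - w 0) \<le> sqrt ((-x) * Pm)" if "x \<le> 0" for x
  proof -
    have "cmod (w x - w 0) = cmod (w 0 - w x)" by (simp add: norm_minus_commute)
    also have "\<dots> \<le> sqrt ((0 - x) * Pm)"
      using Hd[OF that] seg_bound(2)[OF gL that, of "{..0}"] by (simp add: Pm_def)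
    finally show ?thesis by simp
  qed
  define f3 where "f3 x = indicator {0<..} x * (x powr (3/2 - 1) * exp (-b*x))" for x :: real
  define K where "K = Gamma (3/2) / b powr (3/2)"
  have f3i: "integrable lborel f3" and f3v: "(LINT x|lborel. f3 x) = K"
    using gamma_lborel[of "3/2" b] b0 unfolding f3_def[abs_def] by (simp_all add: K_def)
  have f3ri: "integrable lborel (\<lambda>x. f3 (-x))" and f3rv: "(LINT x|lborel. f3 (-x)) = K"
    using reflect_lborel[OF f3i] f3v by simp_all
  have f3pos: "f3 x = sqrt x * exp (-b*x)" if "x > 0" for x
    using that by (simp add: f3_def powr_half_sqrt)
  have f3nn: "0 \<le> f3 x" for x by (simp add: f3_def indicator_def)
  define G where "G x = (sqrt Pp * f3 x + sqrt Pm * f3 (-x)) / sqrt 2" for x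
  have Gi: "integrable lborel G"
    unfolding G_def using f3i f3ri by simp
  have Gv: "(LINT x|lborel. G x) = (sqrt Pp + sqrt Pm) * K / sqrt 2"
    unfolding G_def using f3i f3ri f3v f3rv by (simp add: algebra_simps)
  define F where "F x = (w 0 - w x) * complex_of_real (\<psi> x)" for x
  have FG: "AE x in lborel. cmod (F x) \<le> G x"
  proof (rule AE_mp[OF AE_lborel_singleton[of 0]], rule AE_I2, rule impI)
    fix x :: real assume x: "x \<noteq> 0"
    have cF: "cmod (F x) = cmod (w x - w 0) * \<psi> x"
      using psi0[of x] by (simp add: F_def norm_mult norm_minus_commute)
    show "cmod (F x) \<le> G x"
    proof (cases "x > 0")
      case True
      have "cmod (F x) \<le> sqrt (x * Pp) * (exp (-b*\<bar>x\<bar>) / sqrt 2)"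
        unfolding cF by (rule mult_mono[OF ptp hi]) (use True psi0 Pp0 in auto)
      also have "\<dots> = G x" using True f3pos[OF True]
        by (simp add: G_def f3_def real_sqrt_mult)
      finally show ?thesis .
    next
      case False
      hence xn: "x < 0" using x by simp
      have "cmod (F x) \<le> sqrt ((-x) * Pm) * (exp (-b*\<bar>x\<bar>) / sqrt 2)"
        unfolding cF by (rule mult_mono[OF ptm hi]) (use xn psi0 Pm0 in \<open>auto simp: mult_nonpos_nonneg\<close>)
      also have "\<dots> = G x" using xn f3pos[of "-x"]
        by (simp add: G_def f3_def real_sqrt_mult[symmetric] mult.commute)
      finally show ?thesis .
    qed
  qed
  have Gnn: "0 \<le> G x" for x using f3nn[of x] f3nn[of "-x"] Pp0 Pm0 by (simp add: G_def)
  have Fm: "F \<in> borel_measurable lborel" unfolding F_def[abs_def] by measurable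
  have FG': "AE x in lborel. norm (F x) \<le> norm (G x)" using FG by eventually_elim (simp add: Gnn)
  have Fi: "integrable lborel F"
    by (rule Bochner_Integration.integrable_bound[OF Gi Fm FG'])
  define f1 where "f1 c x = indicator {0<..} x * (x powr (1 - 1) * exp (-c*x))" for c x :: real
  have f1i: "integrable lborel (f1 c)" and f1v: "(LINT x|lborel. f1 c x) = 1 / c" if "c > 0" for c
    using gamma_lborel[of 1 c] that unfolding f1_def[abs_def] by simp_all
  have f1ri: "integrable lborel (\<lambda>x. f1 c (-x))" and f1rv: "(LINT x|lborel. f1 c (-x)) = 1 / c" if "c > 0" for c
    using reflect_lborel[OF f1i[OF that]] f1v[OF that] by simp_all
  have f1pos: "f1 c x = exp (-c*x)" if "x > 0" for c x using that by (simp add: f1_def)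
  have f1nn: "0 \<le> f1 c x" for c x by (simp add: f1_def indicator_def)
  have psi_i: "integrable lborel \<psi>"
  proof (rule Bochner_Integration.integrable_bound[where f="\<lambda>x. (f1 b x + f1 b (-x)) / sqrt 2"])
    show "integrable lborel (\<lambda>x. (f1 b x + f1 b (- x)) / sqrt 2)"
      using f1i[OF b0] f1ri[OF b0] by simp
    show "\<psi> \<in> borel_measurable lborel" by simp
    show "AE x in lborel. norm (\<psi> x) \<le> norm ((f1 b x + f1 b (- x)) / sqrt 2)"
    proof (rule AE_mp[OF AE_lborel_singleton[of 0]], rule AE_I2, rule impI)
      fix x :: real assume x: "x \<noteq> 0"
      have "\<psi> x \<le> (f1 b x + f1 b (- x)) / sqrt 2"
      proof (cases "x > 0")
        case True thus ?thesis using hi[of x] f1pos[OF True, of b] by (simp add: f1_def)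
      next
        case False hence "-x > 0" using x by simp
        thus ?thesis using hi[of x] f1pos[of "-x" b] False by (simp add: f1_def)
      qed
      thus "norm (\<psi> x) \<le> norm ((f1 b x + f1 b (- x)) / sqrt 2)"
        using psi0[of x] f1nn[of b x] f1nn[of b "-x"] by simp
    qed
  qed
  define I0 where "I0 = (LINT x|lborel. \<psi> x)"
  have I0lo: "2 * sqrt 2 \<le> I0"
  proof -
    have h: "(0::real) < 1/2" by simp
    have "(LINT x|lborel. (f1 (1/2) x + f1 (1/2) (-x)) / sqrt 2) = (2 + 2) / sqrt 2"
      using f1i[OF h] f1ri[OF h] f1v[OF h] f1rv[OF h] by simp
    also have "\<dots> = 2 * sqrt 2"
    proof -
      have "sqrt 2 * sqrt 2 = (2::real)" by simp
      thus ?thesis by (simp add: divide_eq_eq)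
    qed
    finally have e: "(LINT x|lborel. (f1 (1/2) x + f1 (1/2) (-x)) / sqrt 2) = 2 * sqrt 2" .
    have "(LINT x|lborel. (f1 (1/2) x + f1 (1/2) (-x)) / sqrt 2) \<le> I0"
      unfolding I0_def
    proof (rule integral_mono)
      show "integrable lborel (\<lambda>x. (f1 (1/2) x + f1 (1/2) (-x)) / sqrt 2)"
        using f1i[OF h] f1ri[OF h] by simp
      show "integrable lborel \<psi>" by (rule psi_i)
      fix x :: real
      have "(f1 (1/2) x + f1 (1/2) (-x)) / sqrt 2 \<le> phi x"
        by (cases "x > 0"; cases "x < 0") (simp_all add: f1_def phi_def)
      thus "(f1 (1/2) x + f1 (1/2) (-x)) / sqrt 2 \<le> \<psi> x" using lo[of x] by linarith
    qed
    with e show ?thesis by simp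
  qed
  have w0i: "integrable lborel (\<lambda>x. w 0 * complex_of_real (\<psi> x))"
    using psi_i by simp
  have wpi: "integrable lborel (\<lambda>x. w x * complex_of_real (\<psi> x))"
  proof -
    have "integrable lborel (\<lambda>x. w 0 * complex_of_real (\<psi> x) - F x)"
      using w0i Fi by simp
    moreover have "(\<lambda>x. w 0 * complex_of_real (\<psi> x) - F x) = (\<lambda>x. w x * complex_of_real (\<psi> x))"
      by (auto simp: F_def fun_eq_iff algebra_simps)
    ultimately show ?thesis by simp
  qed
  have "(LINT x|lborel. F x) = (LINT x|lborel. w 0 * complex_of_real (\<psi> x)) - (LINT x|lborel. w x * complex_of_real (\<psi> x))"
    unfolding F_def[abs_def] using w0i wpi by (simp add: algebra_simps)
  also have "\<dots> = w 0 * complex_of_real I0" using orth by (simp add: I0_def)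
  finally have Fv: "(LINT x|lborel. F x) = w 0 * complex_of_real I0" .
  have I00: "0 \<le> I0" using I0lo by (smt (verit) real_sqrt_ge_zero)
  have "cmod (w 0) * I0 = cmod (LINT x|lborel. F x)" using Fv I00 by (simp add: norm_mult)
  also have "\<dots> \<le> (LINT x|lborel. cmod (F x))" by (rule integral_norm_bound)
  also have "\<dots> \<le> (LINT x|lborel. G x)"
    by (rule integral_mono_AE[OF _ Gi FG]) (use Fi in simp)
  also have "\<dots> = (sqrt Pp + sqrt Pm) * K / sqrt 2" by (rule Gv)
  finally have main: "cmod (w 0) * I0 \<le> (sqrt Pp + sqrt Pm) * K / sqrt 2" .
  define u where "u = cmod (w 0)"
  define S where "S = sqrt Pp + sqrt Pm"
  have u0: "0 \<le> u" by (simp add: u_def)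
  have S0: "0 \<le> S" using Pp0 Pm0 by (simp add: S_def)
  have s2: "sqrt 2 * sqrt 2 = (2::real)" by simp
  have "u * (2 * sqrt 2) \<le> u * I0" using I0lo u0 by (rule mult_left_mono)
  also have "\<dots> \<le> S * K / sqrt 2" using main by (simp add: u_def S_def)
  finally have "u * (2 * sqrt 2) \<le> S * K / sqrt 2" .
  hence "u * (2 * sqrt 2) * sqrt 2 \<le> S * K" by (simp add: le_divide_eq)
  hence h1: "u * 4 \<le> S * K" using s2 by (simp add: mult.assoc)
  have bpow: "b powr (3/2) = b * sqrt b"
  proof -
    have "b powr (3/2) = b powr (1 + 1/2)" by simp
    also have "\<dots> = b powr 1 * b powr (1/2)" by (rule powr_add)
    also have "\<dots> = b * b powr (1/2)" using b0 by simp
    finally show ?thesis using b0 by (simp add: powr_half_sqrt)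
  qed
  have K0: "0 \<le> K" using b0 by (simp add: K_def)
  have Ksq: "K\<^sup>2 = pi / (4 * b^3)"
    using b0 by (simp add: K_def Gamma_three_halves bpow power_divide power_mult_distrib power2_eq_square[of "sqrt b"])
      (simp add: power2_eq_square power3_eq_cube)
  have b3: "b^3 \<ge> (49/100)^3" using b b0 by (intro power_mono) auto
  have "(49/100)^3 = (117649/1000000::real)" by (simp add: power3_eq_cube)
  moreover have "pi \<le> 16/5" using pi_approx(2) by simp
  ultimately have "pi \<le> 32 * b^3" using b3 by linarith
  hence K8: "K\<^sup>2 \<le> 8" using b0 by (simp add: Ksq divide_le_eq)
  have S2: "S\<^sup>2 \<le> 2 * P"
  proof -
    have "0 \<le> (sqrt Pp - sqrt Pm)\<^sup>2" by simp
    thus ?thesis using Pp0 Pm0 PpPm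
      by (simp add: S_def power2_eq_square algebra_simps)
  qed
  have "(u * 4)\<^sup>2 \<le> (S * K)\<^sup>2" using h1 u0 by (intro power_mono) auto
  also have "\<dots> = S\<^sup>2 * K\<^sup>2" by (simp add: power_mult_distrib)
  also have "\<dots> \<le> (2 * P) * 8" using S2 K8 Pp0 Pm0 PpPm by (intro mult_mono) auto
  finally have "u\<^sup>2 \<le> P" by (simp add: power_mult_distrib)
  thus ?thesis by (simp add: u_def P_def)
qed


theorem claim2p5:
  fixes ch :: "real \<Rightarrow> real"
  assumes "cutoff ch"
  shows "\<exists>A0 > 1. \<exists>C0 > 0. \<forall>A \<ge> A0. \<forall>\<xi> w'.
           H1 \<xi> \<longrightarrow> L2c \<xi> \<longrightarrow>
           H1_deriv (\<lambda>x. complex_of_real (zeta ch A x) * \<xi> x) w' \<longrightarrow>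
           L2_norm_sq w' - (cmod (complex_of_real (zeta ch A 0) * \<xi> 0))\<^sup>2
             \<ge> - C0 / A\<^sup>2 * (L2_norm_sq w' + (cmod (complex_of_real (zeta ch A 0) * \<xi> 0))\<^sup>2)"
proof -
  have key: "- 1 / A\<^sup>2 * (L2_norm_sq w' + (cmod (complex_of_real (zeta ch A 0) * \<xi> 0))\<^sup>2)
     \<le> L2_norm_sq w' - (cmod (complex_of_real (zeta ch A 0) * \<xi> 0))\<^sup>2"
    if A: "100 \<le> A" and Lc: "L2c \<xi>"
    and H: "H1_deriv (\<lambda>x. complex_of_real (zeta ch A x) * \<xi> x) w'"
    for A :: real and \<xi> w' :: "real \<Rightarrow> complex"
  proof -
  have A0: "A > 0" using A by simp
  have sm: "smooth_fun ch" and ch01: "\<And>x. 0 \<le> ch x \<and> ch x \<le> 1"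
    using assms by (auto simp: cutoff_def)
  have "ch differentiable (at x)" for x using sm unfolding smooth_fun_def
    by (metis funpow_0)
  hence "continuous_on UNIV ch"
    by (intro differentiable_imp_continuous_on differentiable_at_imp_differentiable_on) auto
  hence chm[measurable]: "ch \<in> borel_measurable borel" by (rule borel_measurable_continuous_onI)
  define \<psi> where "\<psi> x = phi x / zeta ch A x" for x
  define b where "b = 1/2 - 1/A"
  have psim: "\<psi> \<in> borel_measurable borel" unfolding \<psi>_def[abs_def] zeta_def[abs_def] phi_def[abs_def]
    by measurable
  have zpos: "0 < zeta ch A x" for x by (simp add: zeta_def)
  have ex: "0 \<le> (\<bar>x\<bar> / A) * (1 - ch x)" for x using ch01[of x] A0 by simp
  have ex2: "(\<bar>x\<bar> / A) * (1 - ch x) \<le> \<bar>x\<bar> / A" for x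
  proof -
    have "\<bar>x\<bar> * (1 - ch x) \<le> \<bar>x\<bar>" using ch01[of x] by (simp add: mult_left_le)
    thus ?thesis using A0 by (simp add: divide_right_mono)
  qed
  have psi_eq: "\<psi> x = exp (- \<bar>x\<bar> / 2 + (\<bar>x\<bar> / A) * (1 - ch x)) / sqrt 2" for x
  proof -
    have "\<psi> x = (exp (- \<bar>x\<bar> / 2) / exp (- (\<bar>x\<bar> / A) * (1 - ch x))) / sqrt 2"
      by (simp add: \<psi>_def phi_def zeta_def divide_divide_eq_left mult.commute)
    also have "exp (- \<bar>x\<bar> / 2) / exp (- (\<bar>x\<bar> / A) * (1 - ch x)) = exp (- \<bar>x\<bar> / 2 + (\<bar>x\<bar> / A) * (1 - ch x))"
      by (simp add: exp_diff[symmetric])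
    finally show ?thesis .
  qed
  have lo: "phi x \<le> \<psi> x" for x
    unfolding psi_eq phi_def using ex[of x] by (intro divide_right_mono) auto
  have hi: "\<psi> x \<le> exp (-b*\<bar>x\<bar>) / sqrt 2" for x
  proof -
    have "- \<bar>x\<bar> / 2 + (\<bar>x\<bar> / A) * (1 - ch x) \<le> -b*\<bar>x\<bar>"
      using ex2[of x] by (simp add: b_def algebra_simps)
    thus ?thesis unfolding psi_eq by (intro divide_right_mono) auto
  qed
  have bb: "49/100 \<le> b"
  proof -
    have "1/A \<le> 1/100" using A by (intro divide_left_mono) auto
    thus ?thesis by (simp add: b_def)
  qed
  have orth: "(LINT x|lborel. complex_of_real (zeta ch A x) * \<xi> x * complex_of_real (\<psi> x)) = 0"
  proof -
    have "complex_of_real (zeta ch A x) * \<xi> x * complex_of_real (\<psi> x) = \<xi> x * complex_of_real (phi x)" for x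
      using zpos[of x] by (simp add: \<psi>_def of_real_divide field_simps)
    hence eq: "(\<lambda>x. complex_of_real (zeta ch A x) * \<xi> x * complex_of_real (\<psi> x)) = (\<lambda>x. \<xi> x * complex_of_real (phi x))"
      by (rule ext)
    show ?thesis unfolding eq using Lc by (simp add: L2c_def)
  qed
  have core1: "(cmod (complex_of_real (zeta ch A 0) * \<xi> 0))\<^sup>2 \<le> L2_norm_sq w'"
    by (rule core[OF H psim lo hi bb orth])
  have "- 1 / A\<^sup>2 * (L2_norm_sq w' + (cmod (complex_of_real (zeta ch A 0) * \<xi> 0))\<^sup>2) \<le> 0"
  proof (rule mult_nonpos_nonneg)
    have q0: "0 \<le> (cmod (complex_of_real (zeta ch A 0) * \<xi> 0))\<^sup>2" by (rule zero_le_power2)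
    show "0 \<le> L2_norm_sq w' + (cmod (complex_of_real (zeta ch A 0) * \<xi> 0))\<^sup>2"
      using core1 q0 by linarith
  qed (use A0 in simp)
  also have "0 \<le> L2_norm_sq w' - (cmod (complex_of_real (zeta ch A 0) * \<xi> 0))\<^sup>2"
    using core1 by simp
  finally show ?thesis .
  qed
  show ?thesis
  proof (rule exI[of _ "100::real"], intro conjI)
    show "(100::real) > 1" by simp
    show "\<exists>C0>0. \<forall>A\<ge>100. \<forall>\<xi> w'. H1 \<xi> \<longrightarrow> L2c \<xi> \<longrightarrow>
           H1_deriv (\<lambda>x. complex_of_real (zeta ch A x) * \<xi> x) w' \<longrightarrow>
           L2_norm_sq w' - (cmod (complex_of_real (zeta ch A 0) * \<xi> 0))\<^sup>2
             \<ge> - C0 / A\<^sup>2 * (L2_norm_sq w' + (cmod (complex_of_real (zeta ch A 0) * \<xi> 0))\<^sup>2)"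
    proof (rule exI[of _ "1::real"], intro conjI allI impI)
      show "(1::real) > 0" by simp
    qed (rule key; assumption)
  qed
qed

end
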